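(* Let $A$ be a primitive axial algebra of Jordan type $\tfrac12$ and let $a,b$ be distinct $\tfrac12$-axes such that $N=N_{a,b}$ has an identity element $\mathbf 1$ and $ab=-\tfrac14\mathbf 1+\tfrac12a+\tfrac12b$. Then, for $\{x,y\}=\{a,b\}$: (1) $\dim N=3$ and $x^{\tau(y)}=\mathbf 1-x$; (2) $N_{1/2}(x)=\mathbb F(\mathbf 1-2y)$; (3) $|\tau(a)\tau(b)|\in\{2,4\}$; (4) $|\tau(a)\tau(b)|=2$ if and only if $\tau(z)=\tau(\mathbf 1-z)$ for $z\in\{a,b\}$; (5) if $|\tau(a)\tau(b)|=4$ then $\tau(a)\tau(\mathbf 1-a)=\tau(b)\tau(\mathbf 1-b)=:t$ and the center of $\langle\tau(a),\tau(b)\rangle$ is $\langle t\rangle$; (6) $\mathbf 1-a$ and $\mathbf 1-b$ are $\tfrac12$-axes, and for all $u\in\{a,\mathbf 1-a\}$, $v\in\{b,\mathbf 1-b\}$ one has $uv=-\tfrac14\mathbf 1+\tfrac12u+\tfrac12v$ and $N_{u,v}=N$.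
   Context: $\mathbb F$ is a field of characteristic $\neq 2$. For a commutative $\mathbb F$-algebra $A$, a subalgebra $N$, $x\in N$ and $\lambda\in\mathbb F$, put $N_\lambda(x)=\{y\in N: yx=\lambda y\}$ (and $A_\lambda(x)$ similarly). A $\tfrac12$-axis is an idempotent $a$ with $A=A_1(a)\oplus A_0(a)\oplus A_{1/2}(a)$, $A_1(a)=\mathbb F a$, and with $A_+(a)=A_1(a)\oplus A_0(a)$, $A_-(a)=A_{1/2}(a)$ satisfying $A_+A_+\subseteq A_+$, $A_+A_-\subseteq A_-$, $A_-A_-\subseteq A_+$, $A_0(a)A_0(a)\subseteq A_0(a)$. A primitive axial algebra of Jordan type $\tfrac12$ is a commutative algebra generated by $\tfrac12$-axes. The Miyamoto involution $\tau(a)$ is the automorphism acting as $1$ on $A_+(a)$ and $-1$ on $A_-(a)$. $N_{a,b}$ is the subalgebra generated by $a,b$; an identity element of $N$ is $\mathbf 1\in N$ with $\mathbf 1n=n$ for all $n\in N$. *)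

theory Defs
  imports Complex_Main
begin

text \<open>A commutative (not necessarily associative) algebra over the field 'f is
given by a scalar multiplication sc and a product m on the type 'v,
where the whole type 'v is the algebra A.\<close>

definition comm_alg :: "('f::field \<Rightarrow> 'v::ab_group_add \<Rightarrow> 'v) \<Rightarrow> ('v \<Rightarrow> 'v \<Rightarrow> 'v) \<Rightarrow> bool" where
  "comm_alg sc m \<longleftrightarrow> vector_space sc
     \<and> (\<forall>x y. m x y = m y x)
     \<and> (\<forall>x y z. m (x + y) z = m x z + m y z)
     \<and> (\<forall>c x y. m (sc c x) y = sc c (m x y))"

definition subalg :: "('f::field \<Rightarrow> 'v::ab_group_add \<Rightarrow> 'v) \<Rightarrow> ('v \<Rightarrow> 'v \<Rightarrow> 'v) \<Rightarrow> 'v set \<Rightarrow> bool" where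
  "subalg sc m N \<longleftrightarrow> module.subspace sc N \<and> (\<forall>x\<in>N. \<forall>y\<in>N. m x y \<in> N)"

definition gen_alg :: "('f::field \<Rightarrow> 'v::ab_group_add \<Rightarrow> 'v) \<Rightarrow> ('v \<Rightarrow> 'v \<Rightarrow> 'v) \<Rightarrow> 'v set \<Rightarrow> 'v set" where
  "gen_alg sc m X = \<Inter>{N. subalg sc m N \<and> X \<subseteq> N}"

definition eig :: "('f::field \<Rightarrow> 'v::ab_group_add \<Rightarrow> 'v) \<Rightarrow> ('v \<Rightarrow> 'v \<Rightarrow> 'v) \<Rightarrow> 'v set \<Rightarrow> 'v \<Rightarrow> 'f \<Rightarrow> 'v set" where
  "eig sc m N x l = {y \<in> N. m y x = sc l y}"

definition Aplus :: "('f::field \<Rightarrow> 'v::ab_group_add \<Rightarrow> 'v) \<Rightarrow> ('v \<Rightarrow> 'v \<Rightarrow> 'v) \<Rightarrow> 'v \<Rightarrow> 'v set" where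
  "Aplus sc m a = {u + w | u w. u \<in> eig sc m UNIV a 1 \<and> w \<in> eig sc m UNIV a 0}"

definition Aminus :: "('f::field \<Rightarrow> 'v::ab_group_add \<Rightarrow> 'v) \<Rightarrow> ('v \<Rightarrow> 'v \<Rightarrow> 'v) \<Rightarrow> 'v \<Rightarrow> 'v set" where
  "Aminus sc m a = eig sc m UNIV a (1/2)"

definition half_axis :: "('f::field \<Rightarrow> 'v::ab_group_add \<Rightarrow> 'v) \<Rightarrow> ('v \<Rightarrow> 'v \<Rightarrow> 'v) \<Rightarrow> 'v \<Rightarrow> bool" where
  "half_axis sc m a \<longleftrightarrow>
     m a a = a
     \<and> (\<forall>y. \<exists>y1 y0 yh. y1 \<in> eig sc m UNIV a 1 \<and> y0 \<in> eig sc m UNIV a 0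
            \<and> yh \<in> eig sc m UNIV a (1/2) \<and> y = y1 + y0 + yh)
     \<and> (\<forall>y1 y0 yh. y1 \<in> eig sc m UNIV a 1 \<and> y0 \<in> eig sc m UNIV a 0
            \<and> yh \<in> eig sc m UNIV a (1/2) \<and> y1 + y0 + yh = 0
            \<longrightarrow> y1 = 0 \<and> y0 = 0 \<and> yh = 0)
     \<and> eig sc m UNIV a 1 = range (\<lambda>c. sc c a)
     \<and> (\<forall>x\<in>Aplus sc m a. \<forall>y\<in>Aplus sc m a. m x y \<in> Aplus sc m a)
     \<and> (\<forall>x\<in>Aplus sc m a. \<forall>y\<in>Aminus sc m a. m x y \<in> Aminus sc m a)
     \<and> (\<forall>x\<in>Aminus sc m a. \<forall>y\<in>Aminus sc m a. m x y \<in> Aplus sc m a)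
     \<and> (\<forall>x\<in>eig sc m UNIV a 0. \<forall>y\<in>eig sc m UNIV a 0. m x y \<in> eig sc m UNIV a 0)"

definition prim_axial_half :: "('f::field \<Rightarrow> 'v::ab_group_add \<Rightarrow> 'v) \<Rightarrow> ('v \<Rightarrow> 'v \<Rightarrow> 'v) \<Rightarrow> bool" where
  "prim_axial_half sc m \<longleftrightarrow> comm_alg sc m
     \<and> (\<exists>X. (\<forall>x\<in>X. half_axis sc m x) \<and> gen_alg sc m X = UNIV)"

definition tau :: "('f::field \<Rightarrow> 'v::ab_group_add \<Rightarrow> 'v) \<Rightarrow> ('v \<Rightarrow> 'v \<Rightarrow> 'v) \<Rightarrow> 'v \<Rightarrow> 'v \<Rightarrow> 'v" where
  "tau sc m a y = (THE z. \<exists>p\<in>Aplus sc m a. \<exists>q\<in>Aminus sc m a. y = p + q \<and> z = p - q)"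

text \<open>Order of a map under composition; 0 encodes infinite order.\<close>
definition ord_fun :: "('a \<Rightarrow> 'a) \<Rightarrow> nat" where
  "ord_fun f = (if \<exists>n>0. f ^^ n = id then LEAST n. n > 0 \<and> f ^^ n = id else 0)"

inductive_set gen_grp :: "('a \<Rightarrow> 'a) set \<Rightarrow> ('a \<Rightarrow> 'a) set" for S where
  gen_id: "id \<in> gen_grp S"
| gen_base: "s \<in> S \<Longrightarrow> s \<in> gen_grp S"
| gen_comp: "f \<in> gen_grp S \<Longrightarrow> g \<in> gen_grp S \<Longrightarrow> f \<circ> g \<in> gen_grp S"
| gen_inv: "f \<in> gen_grp S \<Longrightarrow> inv f \<in> gen_grp S"

definition center :: "('a \<Rightarrow> 'a) set \<Rightarrow> ('a \<Rightarrow> 'a) set" where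
  "center G = {g \<in> G. \<forall>h\<in>G. g \<circ> h = h \<circ> g}"

end

theory Submission
  imports Defs
begin


locale calg = vector_space sc for sc :: "'f::field \<Rightarrow> 'v::ab_group_add \<Rightarrow> 'v" +
  fixes m :: "'v \<Rightarrow> 'v \<Rightarrow> 'v"
  assumes mcomm: "m x y = m y x" and madd: "m (x + y) z = m x z + m y z"
    and msc: "m (sc c x) y = sc c (m x y)"
begin

lemma maddR: "m z (x + y) = m z x + m z y"
  using madd mcomm by metis
lemma mscR: "m y (sc c x) = sc c (m y x)"
  using msc mcomm by metis
lemma m0L[simp]: "m 0 y = 0"
  using madd[of 0 0 y] by simp
lemma m0R[simp]: "m y 0 = 0"
  using m0L mcomm by metis
lemma mnegL: "m (- x) y = - m x y"
  using madd[of x "-x" y] by (simp add: eq_neg_iff_add_eq_0 add.commute)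
lemma mnegR: "m y (- x) = - m y x"
  using mnegL mcomm by metis
lemma mdiffL: "m (x - z) y = m x y - m z y"
  using madd[of x "-z" y] mnegL by simp
lemma mdiffR: "m y (x - z) = m y x - m y z"
  using mdiffL mcomm by metis

lemma eig_add: "u \<in> eig sc m UNIV x l \<Longrightarrow> w \<in> eig sc m UNIV x l \<Longrightarrow> u + w \<in> eig sc m UNIV x l"
  by (simp add: eig_def madd scale_right_distrib)
lemma eig_sc: "u \<in> eig sc m UNIV x l \<Longrightarrow> sc c u \<in> eig sc m UNIV x l"
  by (simp add: eig_def msc scale_left_commute)
lemma eig_0: "0 \<in> eig sc m UNIV x l"
  by (simp add: eig_def)
lemma eig_neg: "u \<in> eig sc m UNIV x l \<Longrightarrow> - u \<in> eig sc m UNIV x l"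
  by (simp add: eig_def mnegL scale_minus_right)
lemma eig_diff: "u \<in> eig sc m UNIV x l \<Longrightarrow> w \<in> eig sc m UNIV x l \<Longrightarrow> u - w \<in> eig sc m UNIV x l"
  using eig_add[of u x l "-w"] eig_neg by simp

lemma Aplus_add: "u \<in> Aplus sc m x \<Longrightarrow> w \<in> Aplus sc m x \<Longrightarrow> u + w \<in> Aplus sc m x"
  unfolding Aplus_def
proof clarify
  fix u1 w1 u2 w2 assume h: "u1 \<in> eig sc m UNIV x 1" "w1 \<in> eig sc m UNIV x 0"
    "u2 \<in> eig sc m UNIV x 1" "w2 \<in> eig sc m UNIV x 0"
  show "\<exists>u w. u1 + w1 + (u2 + w2) = u + w \<and> u \<in> eig sc m UNIV x 1 \<and> w \<in> eig sc m UNIV x 0"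
    by (rule exI[of _ "u1+u2"], rule exI[of _ "w1+w2"]) (simp add: h eig_add algebra_simps)
qed
lemma Aplus_sc: "u \<in> Aplus sc m x \<Longrightarrow> sc c u \<in> Aplus sc m x"
  unfolding Aplus_def
proof clarify
  fix u1 w1 assume h: "u1 \<in> eig sc m UNIV x 1" "w1 \<in> eig sc m UNIV x 0"
  show "\<exists>u w. sc c (u1 + w1) = u + w \<and> u \<in> eig sc m UNIV x 1 \<and> w \<in> eig sc m UNIV x 0"
    by (rule exI[of _ "sc c u1"], rule exI[of _ "sc c w1"]) (simp add: h eig_sc scale_right_distrib)
qed
lemma Aplus_neg: "u \<in> Aplus sc m x \<Longrightarrow> - u \<in> Aplus sc m x"
  using Aplus_sc[of u x "-1"] by (simp add: scale_minus_left)
lemma Aplus_diff: "u \<in> Aplus sc m x \<Longrightarrow> w \<in> Aplus sc m x \<Longrightarrow> u - w \<in> Aplus sc m x"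
  using Aplus_add[of u x "-w"] Aplus_neg by simp
lemma Aplus_0: "0 \<in> Aplus sc m x"
  unfolding Aplus_def using eig_0 by force
lemma Aplus_1: "u \<in> eig sc m UNIV x 1 \<Longrightarrow> u \<in> Aplus sc m x"
  unfolding Aplus_def using eig_0 by force
lemma Aplus_0': "u \<in> eig sc m UNIV x 0 \<Longrightarrow> u \<in> Aplus sc m x"
  unfolding Aplus_def using eig_0 by force

lemma Aminus_add: "u \<in> Aminus sc m x \<Longrightarrow> w \<in> Aminus sc m x \<Longrightarrow> u + w \<in> Aminus sc m x"
  unfolding Aminus_def by (rule eig_add)
lemma Aminus_neg: "u \<in> Aminus sc m x \<Longrightarrow> - u \<in> Aminus sc m x"
  unfolding Aminus_def by (rule eig_neg)
lemma Aminus_sc: "u \<in> Aminus sc m x \<Longrightarrow> sc c u \<in> Aminus sc m x"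
  unfolding Aminus_def by (rule eig_sc)
lemma Aminus_0: "0 \<in> Aminus sc m x"
  unfolding Aminus_def by (rule eig_0)


lemmas hD1 = half_axis_def[THEN iffD1, THEN conjunct1]
lemmas hD2 = half_axis_def[THEN iffD1, THEN conjunct2, THEN conjunct1]
lemmas hD3 = half_axis_def[THEN iffD1, THEN conjunct2, THEN conjunct2, THEN conjunct1]
lemmas hD4 = half_axis_def[THEN iffD1, THEN conjunct2, THEN conjunct2, THEN conjunct2, THEN conjunct1]
lemmas hD5 = half_axis_def[THEN iffD1, THEN conjunct2, THEN conjunct2, THEN conjunct2, THEN conjunct2, THEN conjunct1]
lemmas hD6 = half_axis_def[THEN iffD1, THEN conjunct2, THEN conjunct2, THEN conjunct2, THEN conjunct2, THEN conjunct2, THEN conjunct1]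
lemmas hD7 = half_axis_def[THEN iffD1, THEN conjunct2, THEN conjunct2, THEN conjunct2, THEN conjunct2, THEN conjunct2, THEN conjunct2, THEN conjunct1]
lemmas hD8 = half_axis_def[THEN iffD1, THEN conjunct2, THEN conjunct2, THEN conjunct2, THEN conjunct2, THEN conjunct2, THEN conjunct2, THEN conjunct2]

context fixes x assumes hx: "half_axis sc m x"
begin

lemma decomp: "\<exists>p\<in>Aplus sc m x. \<exists>q\<in>Aminus sc m x. y = p + q"
proof -
  obtain y1 y0 yh where "y1 \<in> eig sc m UNIV x 1" "y0 \<in> eig sc m UNIV x 0"
     "yh \<in> eig sc m UNIV x (1/2)" "y = y1 + y0 + yh"
    using hD2[OF hx] by blast
  then have "y1 + y0 \<in> Aplus sc m x" "yh \<in> Aminus sc m x" "y = (y1 + y0) + yh"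
    unfolding Aplus_def Aminus_def by auto
  then show ?thesis by blast
qed

lemma uniq0: "p \<in> Aplus sc m x \<Longrightarrow> q \<in> Aminus sc m x \<Longrightarrow> p + q = 0 \<Longrightarrow> p = 0 \<and> q = 0"
proof -
  assume p: "p \<in> Aplus sc m x" and q: "q \<in> Aminus sc m x" and s: "p + q = 0"
  from p obtain u w where uw: "p = u + w" "u \<in> eig sc m UNIV x 1" "w \<in> eig sc m UNIV x 0"
    unfolding Aplus_def by blast
  have "u = 0 \<and> w = 0 \<and> q = 0"
    using hD3[OF hx] uw q s unfolding Aminus_def by blast
  then show ?thesis using uw by simp
qed

lemma uniq: "p \<in> Aplus sc m x \<Longrightarrow> q \<in> Aminus sc m x \<Longrightarrow> p' \<in> Aplus sc m x \<Longrightarrow> q' \<in> Aminus sc m x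
   \<Longrightarrow> p + q = p' + q' \<Longrightarrow> p = p' \<and> q = q'"
proof -
  assume h: "p \<in> Aplus sc m x" "q \<in> Aminus sc m x" "p' \<in> Aplus sc m x" "q' \<in> Aminus sc m x"
    "p + q = p' + q'"
  have "p - p' \<in> Aplus sc m x" using h Aplus_diff by blast
  moreover have "q - q' \<in> Aminus sc m x" using h Aminus_add[of q x "-q'"] Aminus_neg by simp
  moreover have "(p - p') + (q - q') = 0" using h(5) by (simp add: algebra_simps)
  ultimately show ?thesis using uniq0 by fastforce
qed

lemma tau_eq: "p \<in> Aplus sc m x \<Longrightarrow> q \<in> Aminus sc m x \<Longrightarrow> tau sc m x (p + q) = p - q"
  unfolding tau_def
proof (rule the_equality)
  assume "p \<in> Aplus sc m x" "q \<in> Aminus sc m x"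
  then show "\<exists>p'\<in>Aplus sc m x. \<exists>q'\<in>Aminus sc m x. p + q = p' + q' \<and> p - q = p' - q'" by blast
next
  fix z assume h: "p \<in> Aplus sc m x" "q \<in> Aminus sc m x"
    "\<exists>p'\<in>Aplus sc m x. \<exists>q'\<in>Aminus sc m x. p + q = p' + q' \<and> z = p' - q'"
  then obtain p' q' where "p'\<in>Aplus sc m x" "q'\<in>Aminus sc m x" "p + q = p' + q'" "z = p' - q'"
    by blast
  then show "z = p - q" using uniq[OF h(1,2)] by metis
qed

lemma tau_invol: "tau sc m x (tau sc m x y) = y"
proof -
  obtain p q where pq: "p\<in>Aplus sc m x" "q\<in>Aminus sc m x" "y = p + q" using decomp by blast
  have t1: "tau sc m x y = p + (- q)" using tau_eq[OF pq(1,2)] pq(3) by simp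
  have t2: "tau sc m x (p + (- q)) = p - (- q)" using tau_eq[OF pq(1) Aminus_neg[OF pq(2)]] .
  show ?thesis unfolding t1 t2 using pq(3) by simp
qed

lemma tau_add: "tau sc m x (y + z) = tau sc m x y + tau sc m x z"
proof -
  obtain p q where pq: "p\<in>Aplus sc m x" "q\<in>Aminus sc m x" "y = p + q" using decomp by blast
  obtain p' q' where pq': "p'\<in>Aplus sc m x" "q'\<in>Aminus sc m x" "z = p' + q'" using decomp by blast
  have "y + z = (p + p') + (q + q')" using pq pq' by (simp add: algebra_simps)
  then have "tau sc m x (y + z) = (p + p') - (q + q')"
    using tau_eq Aplus_add Aminus_add pq pq' by metis
  moreover have "tau sc m x y = p - q" "tau sc m x z = p' - q'" using tau_eq pq pq' by auto
  ultimately show ?thesis by (metis add_diff_add)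
qed

lemma tau_sc: "tau sc m x (sc c y) = sc c (tau sc m x y)"
proof -
  obtain p q where pq: "p\<in>Aplus sc m x" "q\<in>Aminus sc m x" "y = p + q" using decomp by blast
  have "sc c y = sc c p + sc c q" using pq by (simp add: scale_right_distrib)
  then have "tau sc m x (sc c y) = sc c p - sc c q"
    using tau_eq Aplus_sc Aminus_sc pq by metis
  then show ?thesis using tau_eq pq by (simp add: scale_right_diff_distrib)
qed

lemma tau_mult: "tau sc m x (m y z) = m (tau sc m x y) (tau sc m x z)"
proof -
  obtain p q where pq: "p\<in>Aplus sc m x" "q\<in>Aminus sc m x" "y = p + q" using decomp by blast
  obtain p' q' where pq': "p'\<in>Aplus sc m x" "q'\<in>Aminus sc m x" "z = p' + q'" using decomp by blast
  have f: "\<forall>u\<in>Aplus sc m x. \<forall>v\<in>Aplus sc m x. m u v \<in> Aplus sc m x"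
     "\<forall>u\<in>Aplus sc m x. \<forall>v\<in>Aminus sc m x. m u v \<in> Aminus sc m x"
     "\<forall>u\<in>Aminus sc m x. \<forall>v\<in>Aminus sc m x. m u v \<in> Aplus sc m x"
    using hD5[OF hx] hD6[OF hx] hD7[OF hx] by blast+
  have e1: "m y z = (m p p' + m q q') + (m p q' + m q p')"
    using pq pq' by (simp add: madd maddR algebra_simps)
  have P: "m p p' + m q q' \<in> Aplus sc m x" using f pq pq' Aplus_add by blast
  have "m q p' = m p' q" by (rule mcomm)
  then have Q: "m p q' + m q p' \<in> Aminus sc m x" using f pq pq' Aminus_add by metis
  have "tau sc m x (m y z) = (m p p' + m q q') - (m p q' + m q p')"
    using e1 tau_eq[OF P Q] by simp
  also have "\<dots> = (m p p' - m p q') - (m q p' - m q q')" by (simp add: algebra_simps)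
  also have "\<dots> = m (p - q) (p' - q')" unfolding mdiffL mdiffR by (simp add: algebra_simps)
  finally show ?thesis using tau_eq pq pq' by simp
qed

end

definition aut :: "('v \<Rightarrow> 'v) \<Rightarrow> bool" where
  "aut f \<longleftrightarrow> bij f \<and> (\<forall>u v. f (u + v) = f u + f v) \<and> (\<forall>c u. f (sc c u) = sc c (f u))
      \<and> (\<forall>u v. f (m u v) = m (f u) (f v))"

lemma tau_aut: "half_axis sc m x \<Longrightarrow> aut (tau sc m x)"
proof -
  assume h: "half_axis sc m x"
  have "bij (tau sc m x)" using tau_invol[OF h] by (metis bijI' )
  then show ?thesis unfolding aut_def using tau_add[OF h] tau_sc[OF h] tau_mult[OF h] by blast
qed


context fixes f assumes af: "aut f"
begin
lemma af_add: "f (u + v) = f u + f v" using af unfolding aut_def by blast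
lemma af_sc: "f (sc c u) = sc c (f u)" using af unfolding aut_def by blast
lemma af_m: "f (m u v) = m (f u) (f v)" using af unfolding aut_def by blast
lemma af_bij: "bij f" using af unfolding aut_def by blast
lemma af_0: "f 0 = 0" using af_add[of 0 0] by simp
lemma af_inj: "f u = f v \<Longrightarrow> u = v" using af_bij by (meson bij_def injD)
lemma af_inv: "f (inv f y) = y" using af_bij by (simp add: bij_is_surj surj_f_inv_f)
lemma af_inv2: "inv f (f y) = y" using af_bij by (simp add: bij_is_inj inv_f_f)
lemma af_diff: "f (u - v) = f u - f v"
  using af_add[of "u - v" v] by (simp add: algebra_simps)

lemma eig_img: "eig sc m UNIV (f x) l = f ` eig sc m UNIV x l"
proof
  show "f ` eig sc m UNIV x l \<subseteq> eig sc m UNIV (f x) l"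
    unfolding eig_def by (auto simp: af_m[symmetric] af_sc[symmetric])
next
  show "eig sc m UNIV (f x) l \<subseteq> f ` eig sc m UNIV x l"
  proof
    fix z assume z: "z \<in> eig sc m UNIV (f x) l"
    let ?w = "inv f z"
    have "f (m ?w x) = f (sc l ?w)" using z af_m af_sc af_inv unfolding eig_def by simp
    then have "?w \<in> eig sc m UNIV x l" using af_inj unfolding eig_def by blast
    then show "z \<in> f ` eig sc m UNIV x l" using af_inv by (metis imageI)
  qed
qed

lemma Aplus_img: "Aplus sc m (f x) = f ` Aplus sc m x"
proof
  show "Aplus sc m (f x) \<subseteq> f ` Aplus sc m x"
  proof
    fix z assume "z \<in> Aplus sc m (f x)"
    then obtain u w where "z = u + w" "u \<in> f ` eig sc m UNIV x 1" "w \<in> f ` eig sc m UNIV x 0"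
      unfolding Aplus_def eig_img by blast
    then obtain u' w' where "z = f u' + f w'" "u' \<in> eig sc m UNIV x 1" "w' \<in> eig sc m UNIV x 0"
      by blast
    then have "z = f (u' + w')" "u' + w' \<in> Aplus sc m x" using af_add unfolding Aplus_def by auto
    then show "z \<in> f ` Aplus sc m x" by blast
  qed
next
  show "f ` Aplus sc m x \<subseteq> Aplus sc m (f x)"
  proof
    fix z assume "z \<in> f ` Aplus sc m x"
    then obtain u' w' where "z = f (u' + w')" "u' \<in> eig sc m UNIV x 1" "w' \<in> eig sc m UNIV x 0"
      unfolding Aplus_def by blast
    then have "z = f u' + f w'" "f u' \<in> eig sc m UNIV (f x) 1" "f w' \<in> eig sc m UNIV (f x) 0"
      using af_add eig_img by auto
    then show "z \<in> Aplus sc m (f x)" unfolding Aplus_def by blast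
  qed
qed

lemma Aminus_img: "Aminus sc m (f x) = f ` Aminus sc m x"
  unfolding Aminus_def by (rule eig_img)

lemma img_closed: "\<forall>u\<in>S. \<forall>v\<in>T. m u v \<in> U \<Longrightarrow> \<forall>u\<in>f ` S. \<forall>v\<in>f ` T. m u v \<in> f ` U"
  by (auto simp: af_m[symmetric])

lemma aut_half_axis: "half_axis sc m x \<Longrightarrow> half_axis sc m (f x)"
proof -
  assume hx: "half_axis sc m x"
  have c1: "m (f x) (f x) = f x" using hD1[OF hx] af_m by metis
  have c2: "\<forall>y. \<exists>y1 y0 yh. y1 \<in> eig sc m UNIV (f x) 1 \<and> y0 \<in> eig sc m UNIV (f x) 0
            \<and> yh \<in> eig sc m UNIV (f x) (1/2) \<and> y = y1 + y0 + yh"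
  proof
    fix y
    obtain y1 y0 yh where h: "y1 \<in> eig sc m UNIV x 1" "y0 \<in> eig sc m UNIV x 0"
      "yh \<in> eig sc m UNIV x (1/2)" "inv f y = y1 + y0 + yh"
      using hD2[OF hx] by blast
    have "y = f y1 + f y0 + f yh" using h(4) af_inv af_add by metis
    then show "\<exists>y1 y0 yh. y1 \<in> eig sc m UNIV (f x) 1 \<and> y0 \<in> eig sc m UNIV (f x) 0
            \<and> yh \<in> eig sc m UNIV (f x) (1/2) \<and> y = y1 + y0 + yh"
      using h eig_img by blast
  qed
  have c3: "\<forall>y1 y0 yh. y1 \<in> eig sc m UNIV (f x) 1 \<and> y0 \<in> eig sc m UNIV (f x) 0
            \<and> yh \<in> eig sc m UNIV (f x) (1/2) \<and> y1 + y0 + yh = 0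
            \<longrightarrow> y1 = 0 \<and> y0 = 0 \<and> yh = 0"
  proof (intro allI impI)
    fix y1 y0 yh assume h: "y1 \<in> eig sc m UNIV (f x) 1 \<and> y0 \<in> eig sc m UNIV (f x) 0
            \<and> yh \<in> eig sc m UNIV (f x) (1/2) \<and> y1 + y0 + yh = 0"
    then obtain u1 u0 uh where u: "u1 \<in> eig sc m UNIV x 1" "u0 \<in> eig sc m UNIV x 0"
      "uh \<in> eig sc m UNIV x (1/2)" "y1 = f u1" "y0 = f u0" "yh = f uh"
      unfolding eig_img by blast
    have "f (u1 + u0 + uh) = f 0" using h u af_add af_0 by simp
    then have "u1 + u0 + uh = 0" by (rule af_inj)
    then have "u1 = 0 \<and> u0 = 0 \<and> uh = 0" using hD3[OF hx] u by blast
    then show "y1 = 0 \<and> y0 = 0 \<and> yh = 0" using u af_0 by simp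
  qed
  have "eig sc m UNIV x 1 = range (\<lambda>c. sc c x)" using hD4[OF hx] .
  then have c4: "eig sc m UNIV (f x) 1 = range (\<lambda>c. sc c (f x))"
    unfolding eig_img using af_sc by (simp add: image_image)
  have c5: "\<forall>u\<in>Aplus sc m (f x). \<forall>v\<in>Aplus sc m (f x). m u v \<in> Aplus sc m (f x)"
    "\<forall>u\<in>Aplus sc m (f x). \<forall>v\<in>Aminus sc m (f x). m u v \<in> Aminus sc m (f x)"
    "\<forall>u\<in>Aminus sc m (f x). \<forall>v\<in>Aminus sc m (f x). m u v \<in> Aplus sc m (f x)"
    "\<forall>u\<in>eig sc m UNIV (f x) 0. \<forall>v\<in>eig sc m UNIV (f x) 0. m u v \<in> eig sc m UNIV (f x) 0"
    unfolding Aplus_img Aminus_img eig_img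
    using hD5[OF hx] hD6[OF hx] hD7[OF hx] hD8[OF hx] img_closed by blast+
  show ?thesis unfolding half_axis_def using c1 c2 c3 c4 c5 by (intro conjI)
qed

lemma aut_tau: "half_axis sc m x \<Longrightarrow> tau sc m (f x) y = f (tau sc m x (inv f y))"
proof -
  assume hx: "half_axis sc m x"
  obtain p q where pq: "p\<in>Aplus sc m x" "q\<in>Aminus sc m x" "inv f y = p + q"
    using decomp[OF hx] by blast
  have "y = f p + f q" using pq af_inv af_add by metis
  moreover have "f p \<in> Aplus sc m (f x)" "f q \<in> Aminus sc m (f x)"
    using pq Aplus_img Aminus_img by auto
  ultimately have t1: "tau sc m (f x) y = f p - f q" using tau_eq[OF aut_half_axis[OF hx]] by metis
  have t2: "tau sc m x (inv f y) = p - q" using pq tau_eq[OF hx] by metis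
  show ?thesis unfolding t1 t2 by (rule af_diff[symmetric])
qed
end

end


definition lin3 :: "('f::field \<Rightarrow> 'v::ab_group_add \<Rightarrow> 'v) \<Rightarrow> 'v \<Rightarrow> 'v \<Rightarrow> 'v \<Rightarrow> 'f \<Rightarrow> 'f \<Rightarrow> 'f \<Rightarrow> 'v" where
  "lin3 sc e x y a b c = sc a e + sc b x + sc c y"

lemma lin3_cong[cong]: "a = a' \<Longrightarrow> b = b' \<Longrightarrow> c = c' \<Longrightarrow> lin3 sc e x y a b c = lin3 sc e x y a' b' c'"
  by simp

locale pair = calg sc m for sc :: "'f::field \<Rightarrow> 'v::ab_group_add \<Rightarrow> 'v" and m +
  fixes x y e :: 'v
  assumes hx: "half_axis sc m x" and hy: "half_axis sc m y" and xy: "x \<noteq> y"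
    and ex: "m e x = x" and ey: "m e y = y" and ee: "m e e = e"
    and prod: "m x y = sc (-1/4) e + sc (1/2) x + sc (1/2) y"
    and two: "(2::'f) \<noteq> 0"
begin

abbreviation L where "L \<equiv> lin3 sc e x y"

lemma four: "(4::'f) \<noteq> 0"
proof -
  have "(2::'f) * 2 \<noteq> 0" using no_zero_divisors[OF two two] .
  then show ?thesis by simp
qed

lemma eight: "(8::'f) \<noteq> 0"
proof -
  have "(2::'f) * 4 \<noteq> 0" using no_zero_divisors[OF two four] .
  then show ?thesis by simp
qed
lemma sixteen: "(16::'f) \<noteq> 0"
proof -
  have "(4::'f) * 4 \<noteq> 0" using no_zero_divisors[OF four four] .
  then show ?thesis by simp
qed
lemma n32: "(32::'f) \<noteq> 0"
proof -
  have "(2::'f) * 16 \<noteq> 0" using no_zero_divisors[OF two sixteen] .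
  then show ?thesis by simp
qed
lemma n64: "(64::'f) \<noteq> 0"
proof -
  have "(4::'f) * 16 \<noteq> 0" using no_zero_divisors[OF four sixteen] .
  then show ?thesis by simp
qed
lemmas nz = two four eight sixteen n32 n64

lemma L_add: "L a b c + L a' b' c' = L (a + a') (b + b') (c + c')"
  unfolding lin3_def by (simp add: scale_left_distrib algebra_simps)
lemma L_sc: "sc k (L a b c) = L (k * a) (k * b) (k * c)"
  unfolding lin3_def by (simp add: scale_right_distrib)
lemma L_neg: "- L a b c = L (- a) (- b) (- c)"
  using L_sc[of "-1" a b c] by (simp add: scale_minus_left)
lemma L_diff: "L a b c - L a' b' c' = L (a - a') (b - b') (c - c')"
  by (simp only: diff_conv_add_uminus L_neg L_add)
lemma e_L: "e = L 1 0 0" unfolding lin3_def by simp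
lemma x_L: "x = L 0 1 0" unfolding lin3_def by simp
lemma y_L: "y = L 0 0 1" unfolding lin3_def by simp
lemma z_L: "(0::'v) = L 0 0 0" unfolding lin3_def by simp
lemma L_eqI: "a = a' \<Longrightarrow> b = b' \<Longrightarrow> c = c' \<Longrightarrow> L a b c = L a' b' c'" by simp

lemma xx: "m x x = x" using hD1[OF hx] .
lemma yy: "m y y = y" using hD1[OF hy] .
lemma xe: "m x e = x" using ex mcomm by metis
lemma ye: "m y e = y" using ey mcomm by metis
lemma yx: "m y x = sc (-1/4) e + sc (1/2) x + sc (1/2) y" using prod mcomm by metis

lemmas LN = L_add L_sc L_neg L_diff

lemma m_e_L: "m e (L a b c) = L a b c"
  unfolding lin3_def by (simp add: maddR mscR ee ex ey)
lemma m_x_L: "m x (L a b c) = L (- c / 4) (a + b + c / 2) (c / 2)"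
proof -
  have "m x (L a b c) = sc a x + sc b x + sc c (sc (-1/4) e + sc (1/2) x + sc (1/2) y)"
    unfolding lin3_def by (simp add: maddR mscR xe xx prod)
  also have "\<dots> = L (- c / 4) (a + b + c / 2) (c / 2)"
    apply (simp only: x_L e_L y_L LN cong: lin3_cong)
    by (rule L_eqI; simp add: field_simps nz)
  finally show ?thesis .
qed
lemma m_y_L: "m y (L a b c) = L (- b / 4) (b / 2) (a + c + b / 2)"
proof -
  have "m y (L a b c) = sc a y + sc b (sc (-1/4) e + sc (1/2) x + sc (1/2) y) + sc c y"
    unfolding lin3_def by (simp add: maddR mscR ye yy yx)
  also have "\<dots> = L (- b / 4) (b / 2) (a + c + b / 2)"
    apply (simp only: x_L e_L y_L LN cong: lin3_cong)
    by (rule L_eqI; simp add: field_simps nz)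
  finally show ?thesis .
qed

lemma m_LL: "m (L a1 b1 c1) (L a2 b2 c2) =
   L (a1*a2 - (b1*c2 + c1*b2)/4)
     (a1*b2 + b1*a2 + b1*b2 + (b1*c2 + c1*b2)/2)
     (a1*c2 + c1*a2 + c1*c2 + (b1*c2 + c1*b2)/2)"
proof -
  have "m (L a1 b1 c1) (L a2 b2 c2) = sc a1 (m e (L a2 b2 c2)) + sc b1 (m x (L a2 b2 c2)) + sc c1 (m y (L a2 b2 c2))"
    by (subst (1) lin3_def) (simp add: madd msc)
  also have "\<dots> = L (a1*a2 - (b1*c2 + c1*b2)/4)
     (a1*b2 + b1*a2 + b1*b2 + (b1*c2 + c1*b2)/2)
     (a1*c2 + c1*a2 + c1*c2 + (b1*c2 + c1*b2)/2)"
    unfolding m_e_L m_x_L m_y_L LN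
    by (rule L_eqI; simp add: field_simps nz)
  finally show ?thesis .
qed

lemmas LNM = LN m_LL


lemma y_nz: "y \<noteq> 0"
proof
  assume y0: "y = 0"
  have h: "sc (-1/4) e + sc (1/2) x = 0" using prod y0 by simp
  have "m (sc (-1/4) e + sc (1/2) x) x = sc (-1/4 + 1/2) x"
    unfolding madd msc ex xx by (simp only: scale_left_distrib)
  with h have "sc (-1/4 + 1/2) x = 0" by simp
  moreover have "(-1/4 + 1/2 :: 'f) \<noteq> 0" by (simp add: field_simps nz)
  ultimately have "x = 0" by simp
  with y0 xy show False by simp
qed

lemma e_ne_y: "e \<noteq> y"
proof
  assume ey0: "e = y"
  have yx1: "m y x = x" using ex ey0 by simp
  have eq1: "x = sc (-1/4) y + sc (1/2) x + sc (1/2) y" using yx yx1 ey0 by simp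
  have "m x x = m (sc (-1/4) y + sc (1/2) x + sc (1/2) y) x" using eq1 by simp
  also have "\<dots> = sc (-1/4 + 1/2 + 1/2) x" unfolding madd msc yx1 xx by (simp only: scale_left_distrib)
  finally have "sc 1 x = sc (-1/4 + 1/2 + 1/2) x" using xx by simp
  moreover have "(1::'f) \<noteq> -1/4 + 1/2 + 1/2"
  proof
    assume "(1::'f) = -1/4 + 1/2 + 1/2"
    then have "(1::'f) - (-1/4 + 1/2 + 1/2) = 0" by simp
    moreover have "(1::'f) - (-1/4 + 1/2 + 1/2) = 1/4" by (simp add: field_simps nz)
    ultimately show False using four by simp
  qed
  ultimately have x0: "x = 0" by (simp only: scale_cancel_right) simp
  with eq1 have "sc (-1/4) y + sc (1/2) y = 0" by simp
  then have "sc (-1/4 + 1/2) y = 0" by (simp add: scale_left_distrib)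
  moreover have "(-1/4 + 1/2 :: 'f) \<noteq> 0" by (simp add: field_simps nz)
  ultimately show False using y_nz by simp
qed

lemma one_ne_two: "(1::'f) \<noteq> 2"
proof
  assume "(1::'f) = 2"
  then have "(2::'f) - 1 = 0" by simp
  moreover have "(2::'f) - 1 = 1" by simp
  ultimately show False by simp
qed

lemma e_ne_2x: "e \<noteq> sc 2 x"
proof
  assume h: "e = sc 2 x"
  have "x = sc 2 x" using ex h by (simp add: msc xx)
  then have "sc 1 x = sc 2 x" by simp
  then have "x = 0" using one_ne_two by (simp only: scale_cancel_right) simp
  then have "e = 0" using h by simp
  then have "y = 0" using ey by simp
  then show False using y_nz by simp
qed

lemma eig1y: "sc k y \<in> eig sc m UNIV y 1"
  unfolding eig_def by (simp add: msc yy)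
lemma eig0y: "sc k (e - y) \<in> eig sc m UNIV y 0"
  unfolding eig_def by (simp add: msc mdiffL ey yy)
lemma eighy: "sc k (e - sc 2 x) \<in> eig sc m UNIV y (1/2)"
proof -
  have "m (sc k (e - sc 2 x)) y = sc (1/2) (sc k (e - sc 2 x))"
    by (simp only: x_L e_L y_L LNM cong: lin3_cong) (rule L_eqI; simp add: field_simps nz)
  then show ?thesis unfolding eig_def by simp
qed

lemma L_decomp: "L a b c = sc (a + b/2 + c) y + sc (a + b/2) (e - y) + sc (-b/2) (e - sc 2 x)"
  by (simp only: x_L e_L y_L LNM cong: lin3_cong) (rule L_eqI; simp add: field_simps nz)

lemma L_zero: "L a b c = 0 \<Longrightarrow> a = 0 \<and> b = 0 \<and> c = 0"
proof -
  assume h: "L a b c = 0"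
  have "sc (a + b/2 + c) y = 0 \<and> sc (a + b/2) (e - y) = 0 \<and> sc (-b/2) (e - sc 2 x) = 0"
    using hD3[OF hy] eig1y eig0y eighy h L_decomp by metis
  then have "a + b/2 + c = 0" "a + b/2 = 0" "-b/2 = 0"
    using y_nz e_ne_y e_ne_2x by auto
  then show ?thesis using two by (auto simp: field_simps)
qed

lemma L_inj: "L a b c = L a' b' c' \<Longrightarrow> a = a' \<and> b = b' \<and> c = c'"
proof -
  assume "L a b c = L a' b' c'"
  then have "L (a - a') (b - b') (c - c') = 0" by (simp only: L_diff[symmetric]) simp
  then have "a - a' = 0 \<and> b - b' = 0 \<and> c - c' = 0" by (rule L_zero)
  then show ?thesis by simp
qed

lemma tau_yx: "tau sc m y x = e - x"
proof -
  define p where "p = sc (1/2) y + sc (1/2) (e - y)"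
  define q where "q = sc (-1/2) (e - sc 2 x)"
  have p: "p \<in> Aplus sc m y" unfolding p_def Aplus_def using eig1y eig0y by blast
  have q: "q \<in> Aminus sc m y" unfolding q_def Aminus_def using eighy by blast
  have "x = p + q" unfolding p_def q_def
    by (simp only: x_L e_L y_L LNM cong: lin3_cong) (rule L_eqI; simp add: field_simps nz)
  then have "tau sc m y x = p - q" using tau_eq[OF hy p q] by simp
  also have "\<dots> = e - x" unfolding p_def q_def
    by (simp only: x_L e_L y_L LNM cong: lin3_cong) (rule L_eqI; simp add: field_simps nz)
  finally show ?thesis .
qed

lemma tau_y_ey: "tau sc m y (e - y) = e - y"
proof -
  have "e - y \<in> Aplus sc m y" using Aplus_0'[OF eig0y[of 1]] by simp
  then show ?thesis using tau_eq[OF hy _ Aminus_0, of "e - y"] by simp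
qed

end

context calg begin

lemma gen_alg_sub: "X \<subseteq> gen_alg sc m X"
  unfolding gen_alg_def by blast

lemma gen_alg_min: "subalg sc m S \<Longrightarrow> X \<subseteq> S \<Longrightarrow> gen_alg sc m X \<subseteq> S"
  unfolding gen_alg_def by blast

lemma gen_alg_subalg: "subalg sc m (gen_alg sc m X)"
  unfolding subalg_def
proof
  show "subspace (gen_alg sc m X)" unfolding gen_alg_def
    by (rule subspace_Inter) (auto simp: subalg_def)
  show "\<forall>u\<in>gen_alg sc m X. \<forall>v\<in>gen_alg sc m X. m u v \<in> gen_alg sc m X"
    unfolding gen_alg_def subalg_def by blast
qed

lemma gen_alg_subspace: "subspace (gen_alg sc m X)"
  using gen_alg_subalg unfolding subalg_def by blast
lemma gen_alg_m: "u \<in> gen_alg sc m X \<Longrightarrow> v \<in> gen_alg sc m X \<Longrightarrow> m u v \<in> gen_alg sc m X"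
  using gen_alg_subalg unfolding subalg_def by blast

end

context pair begin

definition R where "R = {v. \<exists>a b c. v = L a b c}"

lemma L_R: "L a b c \<in> R" unfolding R_def by blast

lemma R_subalg: "subalg sc m R"
  unfolding subalg_def
proof
  show "subspace R"
  proof (rule subspaceI)
    show "0 \<in> R" using L_R[of 0 0 0] z_L by simp
    show "u + v \<in> R" if "u \<in> R" "v \<in> R" for u v
      using that unfolding R_def by (auto simp: L_add) blast
    show "sc c u \<in> R" if "u \<in> R" for c u
      using that unfolding R_def by (auto simp: L_sc) blast
  qed
  show "\<forall>u\<in>R. \<forall>v\<in>R. m u v \<in> R"
    unfolding R_def by (auto simp: m_LL) blast
qed

lemma xR: "x \<in> R" using L_R[of 0 1 0] by (simp only: x_L[symmetric])
lemma yR: "y \<in> R" using L_R[of 0 0 1] by (simp only: y_L[symmetric])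
lemma eR: "e \<in> R" using L_R[of 1 0 0] by (simp only: e_L[symmetric])

lemma R_in: assumes S: "subspace S" "e \<in> S" "x \<in> S" "y \<in> S" shows "R \<subseteq> S"
proof (rule subsetI)
  fix v assume "v \<in> R"
  then obtain a b c where v: "v = sc a e + sc b x + sc c y" unfolding R_def lin3_def by blast
  have "sc a e \<in> S" "sc b x \<in> S" "sc c y \<in> S"
    using subspace_scale[OF S(1)] S(2-4) by blast+
  then have "sc a e + sc b x \<in> S" using subspace_add[OF S(1)] by blast
  then have "sc a e + sc b x + sc c y \<in> S" using subspace_add[OF S(1)] \<open>sc c y \<in> S\<close> by blast
  then show "v \<in> S" unfolding v .
qed

lemma N_R: assumes eG: "e \<in> gen_alg sc m {x, y}" shows "gen_alg sc m {x, y} = R"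
proof (rule equalityI)
  have "{x, y} \<subseteq> R" using xR yR by simp
  then show "gen_alg sc m {x, y} \<subseteq> R" by (rule gen_alg_min[OF R_subalg])
  have "{x, y} \<subseteq> gen_alg sc m {x, y}" by (rule gen_alg_sub)
  then have "x \<in> gen_alg sc m {x, y}" "y \<in> gen_alg sc m {x, y}" by simp_all
  then show "R \<subseteq> gen_alg sc m {x, y}" by (rule R_in[OF gen_alg_subspace eG])
qed

lemma dim_R: "dim R = 3"
proof (rule dim_unique[of "{e, x, y}"])
  show "{e, x, y} \<subseteq> R" using eR xR yR by blast
  show "R \<subseteq> span {e, x, y}"
  proof (rule subsetI)
    fix v assume "v \<in> R"
    then obtain a b c where v: "v = sc a e + sc b x + sc c y" unfolding R_def lin3_def by blast
    have "e \<in> span {e, x, y}" "x \<in> span {e, x, y}" "y \<in> span {e, x, y}"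
      by (simp_all add: span_base)
    then show "v \<in> span {e, x, y}" unfolding v by (intro span_add span_scale)
  qed
  have iy: "independent {y}"
    by (rule independent_insertI) (use y_nz independent_empty in auto)
  have ixy: "independent {x, y}"
  proof (rule independent_insertI[OF _ iy])
    show "x \<notin> span {y}"
    proof
      assume "x \<in> span {y}"
      then obtain k where k: "x = sc k y" unfolding span_singleton by blast
      have "sc k y = L 0 0 k" by (simp only: y_L L_sc cong: lin3_cong) (rule L_eqI; simp)
      then have "L 0 1 0 = L 0 0 k" using k x_L by metis
      then show False using L_inj by (metis zero_neq_one)
    qed
  qed
  show "independent {e, x, y}"
  proof (rule independent_insertI[OF _ ixy])
    show "e \<notin> span {x, y}"
    proof
      assume "e \<in> span {x, y}"
      then obtain k where "e - sc k x \<in> span {y}" unfolding span_breakdown_eq by blast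
      then obtain j where "e - sc k x = sc j y" unfolding span_singleton by blast
      then have k: "e = sc k x + sc j y" by (simp add: algebra_simps)
      have "sc k x + sc j y = L 0 k j"
        by (simp only: x_L y_L LNM cong: lin3_cong) (rule L_eqI; simp)
      then have "L 1 0 0 = L 0 k j" using k e_L by metis
      then show False using L_inj by (metis zero_neq_one)
    qed
  qed
  have "e \<noteq> x"
  proof
    assume "e = x" then have "L 1 0 0 = L 0 1 0" using e_L x_L by metis
    then show False using L_inj by (metis zero_neq_one)
  qed
  have "e \<noteq> y"
  proof
    assume "e = y" then have "L 1 0 0 = L 0 0 1" using e_L y_L by metis
    then show False using L_inj by (metis zero_neq_one)
  qed
  then show "card {e, x, y} = 3" using xy \<open>e \<noteq> x\<close> by simp
qed

lemma eig_R: "eig sc m R x (1/2) = range (\<lambda>c. sc c (e - sc 2 y))"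
proof
  show "eig sc m R x (1/2) \<subseteq> range (\<lambda>c. sc c (e - sc 2 y))"
  proof
    fix v assume "v \<in> eig sc m R x (1/2)"
    then obtain a b c where v: "v = L a b c" and h: "m v x = sc (1/2) v"
      unfolding eig_def R_def by blast
    have "m (L a b c) (L 0 1 0) = sc (1/2) (L a b c)" using h v x_L by simp
    then have "L (- c / 4) (a + b + c / 2) (c / 2) = L (a/2) (b/2) (c/2)"
      by (simp only: LNM) (simp add: field_simps)
    then have hh: "- c / 4 = a / 2 \<and> a + b + c / 2 = b / 2 \<and> c / 2 = c / 2" by (rule L_inj)
    then have h1: "- c / 4 = a / 2" and h2: "a + b + c / 2 = b / 2" by blast+
    have eq: "c + 2 * a = 4 * (a/2 - (- c / 4))" by (simp add: field_simps nz)
    have "c + 2 * a = 4 * (a/2 - a/2)" using eq by (simp only: h1)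
    then have "c + 2 * a = 0" by simp
    then have c: "c = - 2 * a" by (simp add: eq_neg_iff_add_eq_0)
    have eq2: "b = 2 * ((a + b + c / 2) - b / 2)" unfolding c by (simp add: field_simps nz)
    have "b = 2 * (b / 2 - b / 2)" using eq2 by (simp only: h2)
    then have "b = 0" by simp
    then have "v = sc a (e - sc 2 y)" unfolding v c
      by (simp only: x_L e_L y_L LNM cong: lin3_cong) (rule L_eqI; simp add: field_simps nz)
    then show "v \<in> range (\<lambda>c. sc c (e - sc 2 y))" by blast
  qed
next
  show "range (\<lambda>c. sc c (e - sc 2 y)) \<subseteq> eig sc m R x (1/2)"
  proof
    fix v assume "v \<in> range (\<lambda>c. sc c (e - sc 2 y))"
    then obtain k where v: "v = sc k (e - sc 2 y)" by blast
    have "v = L k 0 (-2*k)" unfolding v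
      by (simp only: x_L e_L y_L LNM cong: lin3_cong) (rule L_eqI; simp add: field_simps nz)
    then have "v \<in> R" using L_R by simp
    moreover have "m v x = sc (1/2) v" unfolding v
      by (simp only: x_L e_L y_L LNM cong: lin3_cong) (rule L_eqI; simp add: field_simps nz)
    ultimately show "v \<in> eig sc m R x (1/2)" unfolding eig_def by blast
  qed
qed

lemma prod_uv:
  assumes "u = x \<or> u = e - x" "v = y \<or> v = e - y"
  shows "m u v = sc (-1/4) e + sc (1/2) u + sc (1/2) v"
  using assms apply (elim disjE)
  apply (simp_all only: x_L e_L y_L LNM cong: lin3_cong)
  apply (rule L_eqI; simp add: field_simps nz)+
  done

lemma e_uv:
  assumes "u = x \<or> u = e - x" "v = y \<or> v = e - y"
  shows "e = sc 2 u + sc 2 v - sc 4 (m u v)"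
  using assms apply (elim disjE)
  apply (simp_all only: x_L e_L y_L LNM cong: lin3_cong)
  apply (rule L_eqI; simp add: field_simps nz)+
  done

lemma gen_uv:
  assumes au: "u = x \<or> u = e - x" and av: "v = y \<or> v = e - y"
  shows "gen_alg sc m {u, v} = R"
proof (rule equalityI)
  have RS: "subspace R" using R_subalg unfolding subalg_def by blast
  have uR: "u \<in> R" using au
  proof
    assume "u = e - x" then show "u \<in> R" using subspace_diff[OF RS eR xR] by simp
  qed (use xR in simp)
  have vR: "v \<in> R" using av
  proof
    assume "v = e - y" then show "v \<in> R" using subspace_diff[OF RS eR yR] by simp
  qed (use yR in simp)
  have "{u, v} \<subseteq> R" using uR vR by simp
  then show "gen_alg sc m {u, v} \<subseteq> R" by (rule gen_alg_min[OF R_subalg])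
  let ?G = "gen_alg sc m {u, v}"
  have GS: "subspace ?G" by (rule gen_alg_subspace)
  have "{u, v} \<subseteq> ?G" by (rule gen_alg_sub)
  then have uG: "u \<in> ?G" and vG: "v \<in> ?G" by simp_all
  have mG: "m u v \<in> ?G" by (rule gen_alg_m[OF uG vG])
  have "sc 2 u + sc 2 v - sc 4 (m u v) \<in> ?G"
    by (intro subspace_diff[OF GS] subspace_add[OF GS] subspace_scale[OF GS] uG vG mG)
  then have eG: "e \<in> ?G" using e_uv[OF au av] by simp
  have xG: "x \<in> ?G" using au
  proof
    assume "u = e - x" then have "x = e - u" by simp
    then show "x \<in> ?G" using subspace_diff[OF GS eG uG] by simp
  qed (use uG in simp)
  have yG: "y \<in> ?G" using av
  proof
    assume "v = e - y" then have "y = e - v" by simp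
    then show "y \<in> ?G" using subspace_diff[OF GS eG vG] by simp
  qed (use vG in simp)
  show "R \<subseteq> ?G" by (rule R_in[OF GS eG xG yG])
qed

end


lemma ord_fun_24:
  fixes f :: "'a \<Rightarrow> 'a"
  assumes f4: "f \<circ> f \<circ> f \<circ> f = id" and f1: "f \<noteq> id"
  shows "ord_fun f = (if f \<circ> f = id then 2 else 4)"
proof -
  have p1: "f ^^ 1 = f" by simp
  have p2: "f ^^ 2 = f \<circ> f" by (simp add: numeral_eq_Suc)
  have p3: "f ^^ 3 = f \<circ> f \<circ> f" by (simp add: numeral_eq_Suc o_assoc)
  have p4: "f ^^ 4 = f \<circ> f \<circ> f \<circ> f" by (simp add: numeral_eq_Suc o_assoc)
  have f3: "f \<circ> f \<circ> f \<noteq> id"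
  proof
    assume h: "f \<circ> f \<circ> f = id"
    have "f = (f \<circ> f \<circ> f) \<circ> f" using h by simp
    also have "\<dots> = id" using f4 by (simp add: o_assoc)
    finally show False using f1 by simp
  qed
  have ex: "\<exists>n>0. f ^^ n = id" using p4 f4 by (metis zero_less_numeral)
  show ?thesis
  proof (cases "f \<circ> f = id")
    case True
    have "(LEAST n. n > 0 \<and> f ^^ n = id) = 2"
    proof (rule Least_equality)
      show "0 < (2::nat) \<and> f ^^ 2 = id" using True p2 by simp
      fix n :: nat assume "0 < n \<and> f ^^ n = id"
      moreover have "n \<noteq> 1" using calculation f1 by auto
      ultimately show "2 \<le> n" by linarith
    qed
    then show ?thesis using True ex unfolding ord_fun_def by simp
  next
    case False
    have "(LEAST n. n > 0 \<and> f ^^ n = id) = 4"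
    proof (rule Least_equality)
      show "0 < (4::nat) \<and> f ^^ 4 = id" using f4 p4 by simp
      fix n :: nat assume h: "0 < n \<and> f ^^ n = id"
      show "4 \<le> n"
      proof (rule ccontr)
        assume "\<not> 4 \<le> n"
        then have "n = 1 \<or> n = 2 \<or> n = 3" using h by linarith
        then show False using h f1 False f3 p1 p2 p3 by auto
      qed
    qed
    then show ?thesis using False ex unfolding ord_fun_def by simp
  qed
qed

lemma gen_grp_invol:
  assumes tt: "t \<circ> t = id"
  shows "gen_grp {t} = {id, t}"
proof
  have it: "inv t = t" using inv_unique_comp[OF tt tt] .
  show "gen_grp {t} \<subseteq> {id, t}"
  proof
    fix g assume "g \<in> gen_grp {t}"
    then show "g \<in> {id, t}"
    proof (induction rule: gen_grp.induct)
      case (gen_comp f g)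
      then have "f = id \<or> f = t" "g = id \<or> g = t" by auto
      then show ?case by (elim disjE) (simp_all add: tt)
    next
      case (gen_inv f) then show ?case using it by (auto simp: inv_id)
    qed auto
  qed
  show "{id, t} \<subseteq> gen_grp {t}" by (auto intro: gen_grp.intros)
qed

context
  fixes s r :: "'a \<Rightarrow> 'a"
  assumes ss: "s \<circ> s = id" and rr: "r \<circ> r = id"
    and rel: "r \<circ> s \<circ> r \<circ> s = s \<circ> r \<circ> s \<circ> r"
begin

lemma ss': "h \<circ> s \<circ> s = h" using ss by (metis comp_id o_assoc)
lemma rr': "h \<circ> r \<circ> r = h" using rr by (metis comp_id o_assoc)
lemma rel': "h \<circ> r \<circ> s \<circ> r \<circ> s = h \<circ> s \<circ> r \<circ> s \<circ> r" using rel by (metis o_assoc)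

lemmas W = o_assoc ss rr ss' rr' rel rel'

lemma ss_p: "s (s z) = z" using ss by (metis comp_apply id_apply)
lemma rr_p: "r (r z) = z" using rr by (metis comp_apply id_apply)
lemma rel_p: "r (s (r (s z))) = s (r (s (r z)))" using rel by (metis comp_apply)
lemmas P = fun_eq_iff ss_p rr_p

definition D where "D = {id, s, r, s \<circ> r, r \<circ> s, s \<circ> r \<circ> s, r \<circ> s \<circ> r, s \<circ> r \<circ> s \<circ> r}"

lemma sD: "d \<in> D \<Longrightarrow> s \<circ> d \<in> D" unfolding D_def by (auto simp: W)
lemma rD: "d \<in> D \<Longrightarrow> r \<circ> d \<in> D" unfolding D_def by (auto simp: W)

lemma bs: "bij s" using o_bij[OF ss ss] .
lemma br: "bij r" using o_bij[OF rr rr] .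
lemma is_s: "inv s = s" using inv_unique_comp[OF ss ss] .
lemma ir: "inv r = r" using inv_unique_comp[OF rr rr] .

lemma G_D: "g \<in> gen_grp {s, r} \<Longrightarrow> bij g \<and> (\<forall>d\<in>D. g \<circ> d \<in> D) \<and> (\<forall>d\<in>D. inv g \<circ> d \<in> D)"
proof (induction rule: gen_grp.induct)
  case gen_id
  have 1: "bij (id::'a\<Rightarrow>'a)" by (rule bij_id)
  have 2: "\<forall>d\<in>D. id \<circ> d \<in> D" by simp
  have 3: "\<forall>d\<in>D. inv id \<circ> d \<in> D" by (simp add: inv_id)
  show ?case using 1 2 3 by blast
next
  case (gen_base g)
  then have "g = s \<or> g = r" by simp
  then show ?case
  proof
    assume "g = s" then show ?case using sD bs is_s by (simp only:) blast
  next
    assume "g = r" then show ?case using rD br ir by (simp only:) blast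
  qed
next
  case (gen_comp f g)
  then have "inv (f \<circ> g) = inv g \<circ> inv f" using o_inv_distrib by blast
  then show ?case using gen_comp bij_comp by (metis o_assoc)
next
  case (gen_inv g)
  then show ?case using bij_imp_bij_inv inv_inv_eq by metis
qed

lemma G_sub_D: "g \<in> gen_grp {s, r} \<Longrightarrow> g \<in> D"
proof -
  assume "g \<in> gen_grp {s, r}"
  then have "\<forall>d\<in>D. g \<circ> d \<in> D" using G_D by blast
  moreover have "id \<in> D" unfolding D_def by simp
  ultimately have "g \<circ> id \<in> D" by blast
  then show "g \<in> D" by simp
qed

lemma t_comm: "g \<in> gen_grp {s, r} \<Longrightarrow> bij g \<and> (s \<circ> r \<circ> s \<circ> r) \<circ> g = g \<circ> (s \<circ> r \<circ> s \<circ> r)"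
proof (induction rule: gen_grp.induct)
  case gen_id then show ?case by (simp add: bij_id[unfolded id_def])
next
  case (gen_base g)
  then have "g = s \<or> g = r" by simp
  then show ?case
  proof
    assume "g = s" then show ?case using bs by (simp add: P rel_p)
  next
    assume "g = r" then show ?case using br by (simp add: P rel_p)
  qed
next
  case (gen_comp f g)
  let ?t = "s \<circ> r \<circ> s \<circ> r"
  have bf: "bij f" and cf: "?t \<circ> f = f \<circ> ?t" and bg: "bij g" and cg: "?t \<circ> g = g \<circ> ?t"
    using gen_comp.IH by blast+
  have "?t \<circ> (f \<circ> g) = (?t \<circ> f) \<circ> g" by (rule comp_assoc[symmetric])
  also have "\<dots> = f \<circ> (?t \<circ> g)" unfolding cf by (rule comp_assoc)
  also have "\<dots> = (f \<circ> g) \<circ> ?t" unfolding cg by (rule comp_assoc[symmetric])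
  finally show ?case using bij_comp[OF bg bf] by blast
next
  case (gen_inv g)
  let ?t = "s \<circ> r \<circ> s \<circ> r"
  have b: "bij g" and c: "?t \<circ> g = g \<circ> ?t" using gen_inv.IH by blast+
  have "?t \<circ> inv g = inv g \<circ> g \<circ> ?t \<circ> inv g" using b by (simp add: bij_is_inj)
  also have "\<dots> = inv g \<circ> (g \<circ> ?t) \<circ> inv g" by (simp only: comp_assoc)
  also have "\<dots> = inv g \<circ> (?t \<circ> g) \<circ> inv g" by (simp only: c)
  also have "\<dots> = inv g \<circ> ?t \<circ> (g \<circ> inv g)" by (simp only: comp_assoc)
  also have "\<dots> = inv g \<circ> ?t \<circ> id"
    using surj_iff[THEN iffD1, OF bij_is_surj[OF b]] by (simp only:)
  also have "\<dots> = inv g \<circ> ?t" by (rule comp_id)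
  finally show ?case using b bij_imp_bij_inv by blast
qed

lemma center_D4:
  assumes nt: "s \<circ> r \<circ> s \<circ> r \<noteq> id"
  shows "center (gen_grp {s, r}) = {id, s \<circ> r \<circ> s \<circ> r}"
proof
  have sG: "s \<in> gen_grp {s, r}" and rG: "r \<in> gen_grp {s, r}" by (auto intro: gen_grp.intros)
  show "{id, s \<circ> r \<circ> s \<circ> r} \<subseteq> center (gen_grp {s, r})"
  proof -
    have "s \<circ> r \<circ> s \<circ> r \<in> gen_grp {s, r}" using sG rG by (auto intro: gen_grp.intros)
    then show ?thesis unfolding center_def using t_comm by (auto intro: gen_grp.intros)
  qed
  show "center (gen_grp {s, r}) \<subseteq> {id, s \<circ> r \<circ> s \<circ> r}"
  proof
    fix g assume "g \<in> center (gen_grp {s, r})"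
    then have gG: "g \<in> gen_grp {s, r}" and cs: "g \<circ> s = s \<circ> g" and cr: "g \<circ> r = r \<circ> g"
      unfolding center_def using sG rG by auto
    have "g \<in> D" using G_sub_D[OF gG] .
    then have "g = id \<or> g = s \<or> g = r \<or> g = s \<circ> r \<or> g = r \<circ> s \<or> g = s \<circ> r \<circ> s
       \<or> g = r \<circ> s \<circ> r \<or> g = s \<circ> r \<circ> s \<circ> r" unfolding D_def by simp
    then show "g \<in> {id, s \<circ> r \<circ> s \<circ> r}"
    proof (elim disjE)
      assume "g = s" then show ?thesis using cr nt by (simp add: P)
    next
      assume "g = r" then show ?thesis using cs nt by (simp add: P)
    next
      assume "g = s \<circ> r" then show ?thesis using cs nt by (simp add: P)
    next
      assume "g = r \<circ> s" then show ?thesis using cr nt by (simp add: P)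
    next
      assume "g = s \<circ> r \<circ> s" then show ?thesis using cs nt by (simp add: P)
    next
      assume "g = r \<circ> s \<circ> r" then show ?thesis using cr nt by (simp add: P)
    qed simp_all
  qed
qed

end

theorem lemma3p5:
  fixes sc :: "'f::field \<Rightarrow> 'v::ab_group_add \<Rightarrow> 'v"
    and m :: "'v \<Rightarrow> 'v \<Rightarrow> 'v"
    and a b e :: 'v
  defines "N \<equiv> gen_alg sc m {a, b}"
  assumes char: "(2::'f) \<noteq> 0"
    and A: "prim_axial_half sc m"
    and ha: "half_axis sc m a" and hb: "half_axis sc m b" and ab: "a \<noteq> b"
    and eN: "e \<in> N" and unit: "\<forall>n\<in>N. m e n = n"
    and prod: "m a b = sc (-1/4) e + sc (1/2) a + sc (1/2) b"
  shows "vector_space.dim sc N = 3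
    \<and> (\<forall>x y. (x = a \<and> y = b \<or> x = b \<and> y = a) \<longrightarrow>
          tau sc m y x = e - x
        \<and> eig sc m N x (1/2) = range (\<lambda>c. sc c (e - sc 2 y)))
    \<and> ord_fun (tau sc m a \<circ> tau sc m b) \<in> {2, 4}
    \<and> (ord_fun (tau sc m a \<circ> tau sc m b) = 2 \<longleftrightarrow>
         (\<forall>z\<in>{a, b}. tau sc m z = tau sc m (e - z)))
    \<and> (ord_fun (tau sc m a \<circ> tau sc m b) = 4 \<longrightarrow>
         tau sc m a \<circ> tau sc m (e - a) = tau sc m b \<circ> tau sc m (e - b)
       \<and> center (gen_grp {tau sc m a, tau sc m b}) = gen_grp {tau sc m a \<circ> tau sc m (e - a)})
    \<and> half_axis sc m (e - a) \<and> half_axis sc m (e - b)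
    \<and> (\<forall>u\<in>{a, e - a}. \<forall>v\<in>{b, e - b}.
         m u v = sc (-1/4) e + sc (1/2) u + sc (1/2) v \<and> gen_alg sc m {u, v} = N)"
proof -
  have C: "calg sc m" using A unfolding prim_axial_half_def comm_alg_def calg_def calg_axioms_def
    by blast
  interpret calg sc m by (rule C)
  have "{a, b} \<subseteq> N" unfolding N_def by (rule gen_alg_sub)
  then have aN: "a \<in> N" and bN: "b \<in> N" by simp_all
  have ea: "m e a = a" and eb: "m e b = b" and ee: "m e e = e" using unit aN bN eN by auto
  have prod': "m b a = sc (-1/4) e + sc (1/2) b + sc (1/2) a"
    using prod mcomm[of b a] by (simp add: ac_simps)
  have P1: "pair sc m a b e" unfolding pair_def pair_axioms_def
    using C ha hb ab ea eb ee prod char by blast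
  have P2: "pair sc m b a e" unfolding pair_def pair_axioms_def
    using C ha hb ab ea eb ee prod' char by blast
  interpret P1: pair sc m a b e by (rule P1)
  interpret P2: pair sc m b a e by (rule P2)
  have N1: "N = P1.R" unfolding N_def using P1.N_R eN N_def by simp
  have N2: "N = P2.R" unfolding N_def using P2.N_R eN N_def by (simp add: insert_commute)
  have tba: "tau sc m b a = e - a" by (rule P1.tau_yx)
  have tab: "tau sc m a b = e - b" by (rule P2.tau_yx)
  have hea: "half_axis sc m (e - a)"
    using aut_half_axis[OF tau_aut[OF hb] ha] tba by simp
  have heb: "half_axis sc m (e - b)"
    using aut_half_axis[OF tau_aut[OF ha] hb] tab by simp
  have s_p: "\<And>z. tau sc m a (tau sc m a z) = z" using tau_invol[OF ha] .
  have r_p: "\<And>z. tau sc m b (tau sc m b z) = z" using tau_invol[OF hb] .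
  have ss: "tau sc m a \<circ> tau sc m a = id" using s_p by (simp add: fun_eq_iff)
  have rr: "tau sc m b \<circ> tau sc m b = id" using r_p by (simp add: fun_eq_iff)
  have ir: "inv (tau sc m b) = tau sc m b" using inv_unique_comp[OF rr rr] .
  have isa: "inv (tau sc m a) = tau sc m a" using inv_unique_comp[OF ss ss] .
  have ta_p: "\<And>z. tau sc m (e - a) z = tau sc m b (tau sc m a (tau sc m b z))"
    using aut_tau[OF tau_aut[OF hb] ha] tba ir by simp
  have tb_p: "\<And>z. tau sc m (e - b) z = tau sc m a (tau sc m b (tau sc m a z))"
    using aut_tau[OF tau_aut[OF ha] hb] tab isa by simp
  have taea: "tau sc m a (e - a) = e - a" by (rule P2.tau_y_ey)
  have com0: "\<And>z. tau sc m (e - a) z = tau sc m a (tau sc m (e - a) (tau sc m a z))"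
  proof -
    fix z
    have "tau sc m (tau sc m a (e - a)) z = tau sc m a (tau sc m (e - a) (inv (tau sc m a) z))"
      by (rule aut_tau[OF tau_aut[OF ha] hea])
    then show "tau sc m (e - a) z = tau sc m a (tau sc m (e - a) (tau sc m a z))"
      by (simp only: taea isa)
  qed
  have com_p: "\<And>z. tau sc m a (tau sc m (e - a) z) = tau sc m (e - a) (tau sc m a z)"
    using com0 s_p by metis
  have rel_p: "\<And>z. tau sc m b (tau sc m a (tau sc m b (tau sc m a z)))
      = tau sc m a (tau sc m b (tau sc m a (tau sc m b z)))"
    using com_p ta_p by metis
  have rel: "tau sc m b \<circ> tau sc m a \<circ> tau sc m b \<circ> tau sc m a
      = tau sc m a \<circ> tau sc m b \<circ> tau sc m a \<circ> tau sc m b"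
    using rel_p by (simp add: fun_eq_iff)
  let ?f = "tau sc m a \<circ> tau sc m b"
  have f4: "?f \<circ> ?f \<circ> ?f \<circ> ?f = id"
    by (simp add: fun_eq_iff s_p r_p rel_p)
  have taa: "tau sc m a a = a"
  proof -
    have "a \<in> eig sc m UNIV a 1" unfolding eig_def using hD1[OF ha] by simp
    then have "tau sc m a (a + 0) = a - 0" using tau_eq[OF ha Aplus_1 Aminus_0] by blast
    then show ?thesis by simp
  qed
  have f1: "?f \<noteq> id"
  proof
    assume "?f = id"
    then have h: "\<And>z. tau sc m a (tau sc m b z) = z" by (simp add: fun_eq_iff)
    have "tau sc m a a = tau sc m b a" using h[of "tau sc m b a"] r_p by simp
    then have "a = e - a" using taa tba by simp
    then have "e = a + a" by (simp add: algebra_simps)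
    also have "\<dots> = sc 2 a" using scale_left_distrib[of 1 1 a] by simp
    finally show False using P1.e_ne_2x by simp
  qed
  have ord: "ord_fun ?f = (if ?f \<circ> ?f = id then 2 else 4)" by (rule ord_fun_24[OF f4 f1])
  have ff_iff: "?f \<circ> ?f = id \<longleftrightarrow> (\<forall>z\<in>{a, b}. tau sc m z = tau sc m (e - z))"
  proof
    assume "?f \<circ> ?f = id"
    then have h: "\<And>z. tau sc m a (tau sc m b (tau sc m a (tau sc m b z))) = z"
      by (simp add: fun_eq_iff)
    have "\<And>z. tau sc m (e - a) z = tau sc m a z"
      unfolding ta_p using h s_p by metis
    moreover have "\<And>z. tau sc m (e - b) z = tau sc m b z"
      unfolding tb_p using h r_p rel_p by metis
    ultimately show "\<forall>z\<in>{a, b}. tau sc m z = tau sc m (e - z)" by (auto simp: fun_eq_iff)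
  next
    assume "\<forall>z\<in>{a, b}. tau sc m z = tau sc m (e - z)"
    then have "\<And>z. tau sc m (e - a) z = tau sc m a z" by simp
    then have "\<And>z. tau sc m b (tau sc m a (tau sc m b z)) = tau sc m a z" using ta_p by simp
    then show "?f \<circ> ?f = id" by (simp add: fun_eq_iff s_p)
  qed
  have part3: "ord_fun ?f \<in> {2, 4}" using ord by simp
  have part4: "ord_fun ?f = 2 \<longleftrightarrow> (\<forall>z\<in>{a, b}. tau sc m z = tau sc m (e - z))"
    using ord ff_iff by simp
  have part5: "ord_fun ?f = 4 \<longrightarrow>
         tau sc m a \<circ> tau sc m (e - a) = tau sc m b \<circ> tau sc m (e - b)
       \<and> center (gen_grp {tau sc m a, tau sc m b}) = gen_grp {tau sc m a \<circ> tau sc m (e - a)}"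
  proof
    assume "ord_fun ?f = 4"
    then have nff: "?f \<circ> ?f \<noteq> id" using ord by auto
    have t_eq: "tau sc m a \<circ> tau sc m (e - a) = tau sc m a \<circ> tau sc m b \<circ> tau sc m a \<circ> tau sc m b"
      by (simp add: fun_eq_iff ta_p)
    have e1: "tau sc m a \<circ> tau sc m (e - a) = tau sc m b \<circ> tau sc m (e - b)"
      by (simp add: fun_eq_iff ta_p tb_p s_p r_p rel_p)
    have nt: "tau sc m a \<circ> tau sc m b \<circ> tau sc m a \<circ> tau sc m b \<noteq> id"
      using nff by (simp add: o_assoc)
    have tt: "(tau sc m a \<circ> tau sc m (e - a)) \<circ> (tau sc m a \<circ> tau sc m (e - a)) = id"
      using f4 unfolding t_eq by (simp add: o_assoc)
    have "center (gen_grp {tau sc m a, tau sc m b})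
        = {id, tau sc m a \<circ> tau sc m b \<circ> tau sc m a \<circ> tau sc m b}"
      by (rule center_D4[OF ss rr rel nt])
    also have "\<dots> = gen_grp {tau sc m a \<circ> tau sc m (e - a)}"
      using gen_grp_invol[OF tt[unfolded t_eq]] by (simp only: t_eq)
    finally show "tau sc m a \<circ> tau sc m (e - a) = tau sc m b \<circ> tau sc m (e - b)
       \<and> center (gen_grp {tau sc m a, tau sc m b}) = gen_grp {tau sc m a \<circ> tau sc m (e - a)}"
      using e1 by blast
  qed
  have part2: "\<forall>x y. (x = a \<and> y = b \<or> x = b \<and> y = a) \<longrightarrow>
          tau sc m y x = e - x \<and> eig sc m N x (1/2) = range (\<lambda>c. sc c (e - sc 2 y))"
    using tba tab P1.eig_R P2.eig_R N1 N2 by auto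
  have part6: "\<forall>u\<in>{a, e - a}. \<forall>v\<in>{b, e - b}.
         m u v = sc (-1/4) e + sc (1/2) u + sc (1/2) v \<and> gen_alg sc m {u, v} = N"
  proof (intro ballI conjI)
    fix u v assume "u \<in> {a, e - a}" "v \<in> {b, e - b}"
    then have hu: "u = a \<or> u = e - a" and hv: "v = b \<or> v = e - b" by auto
    show "m u v = sc (-1/4) e + sc (1/2) u + sc (1/2) v" by (rule P1.prod_uv[OF hu hv])
    show "gen_alg sc m {u, v} = N" using P1.gen_uv[OF hu hv] N1 by simp
  qed
  have part1: "vector_space.dim sc N = 3" using P1.dim_R N1 by simp
  show ?thesis using part1 part2 part3 part4 part5 part6 hea heb by blast
qed

end
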